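(* For all $t\in\mathbb N$ and real $\vartheta$ we have $S_{2t}(\vartheta)=D_0(\vartheta)S_t(\vartheta)$ and $S_{2t+1}(\vartheta)=D_1(\vartheta)S_t(\vartheta)$, with \[ S_0(\vartheta)=\Bigl(1,\ 1,\ \tfrac{\mathrm e(\vartheta)+1}{2},\ \tfrac{\mathrm e(\vartheta)+1}{2(2-\mathrm e(-\vartheta))},\ \tfrac{3\mathrm e(\vartheta)+2-\mathrm e(-\vartheta)}{4(2-\mathrm e(-\vartheta))},\ \tfrac{2\mathrm e(2\vartheta)+\mathrm e(\vartheta)+\mathrm e(-\vartheta)}{4(2-\mathrm e(-\vartheta))}\Bigr)^T. \] In particular, $\alpha_{8t}=\alpha_{4t}=\beta_{8t}=\beta_{4t}$ for all $t\in\mathbb N$.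
   Context: Let $\mathsf r(n)$ be the number of (overlapping) occurrences of $\mathtt{11}$ in the binary expansion of $n\in\mathbb N=\{0,1,\dots\}$, and $d(t,n)=\mathsf r(n+t)-\mathsf r(n)$. Let $a_t(k)$, $b_t(k)$ be the asymptotic densities (which exist) of $\{n\in\mathbb N:d(t,2n)=k\}$ and $\{n\in\mathbb N:d(t,2n+1)=k\}$ respectively. Write $\mathrm e(\vartheta)=\exp(i\vartheta)$ and define $\alpha_t(\vartheta)=\sum_{k\in\mathbb Z}a_t(k)\mathrm e(k\vartheta)$, $\beta_t(\vartheta)=\sum_{k\in\mathbb Z}b_t(k)\mathrm e(k\vartheta)$, and $S_t(\vartheta)=(\alpha_{2t}(\vartheta),\beta_{2t}(\vartheta),\alpha_{2t+1}(\vartheta),\beta_{2t+1}(\vartheta),\alpha_{2t+2}(\vartheta),\beta_{2t+2}(\vartheta))^T\in\mathbb C^6$. With $x=\mathrm e(\vartheta)$, define the $6\times6$ matrices \[ D_0(\vartheta)=\frac12\begin{pmatrix}1&1&0&0&0&0\\1&1&0&0&0&0\\1&x&0&0&0&0\\0&0&1&x^{-1}&0&0\\0&0&1&1&0&0\\0&0&x&x^{-1}&0&0\end{pmatrix},\quad D_1(\vartheta)=\frac12\begin{pmatrix}0&0&1&1&0&0\\0&0&x&x^{-1}&0&0\\0&0&x&1&0&0\\0&0&0&0&1&x^{-1}\\0&0&0&0&1&1\\0&0&0&0&1&1\end{pmatrix}. \] *)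

theory Defs
  imports "HOL-Analysis.Analysis"
begin

definition ee :: "real \<Rightarrow> complex" where
  "ee \<theta> = exp (\<i> * complex_of_real \<theta>)"

text \<open>Number of (overlapping) occurrences of 11 in the binary expansion of n:
  positions j such that binary digits j and j+1 of n are both 1.\<close>
definition rr :: "nat \<Rightarrow> nat" where
  "rr n = card {j::nat. odd (n div 2 ^ j) \<and> odd (n div 2 ^ Suc j)}"

definition dd :: "nat \<Rightarrow> nat \<Rightarrow> int" where
  "dd t n = int (rr (n + t)) - int (rr n)"

definition density :: "(nat \<Rightarrow> bool) \<Rightarrow> real" where
  "density P = lim (\<lambda>N. real (card {n. n < N \<and> P n}) / real N)"

definition a_dens :: "nat \<Rightarrow> int \<Rightarrow> real" where
  "a_dens t k = density (\<lambda>n. dd t (2 * n) = k)"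

definition b_dens :: "nat \<Rightarrow> int \<Rightarrow> real" where
  "b_dens t k = density (\<lambda>n. dd t (2 * n + 1) = k)"

definition alpha :: "nat \<Rightarrow> real \<Rightarrow> complex" where
  "alpha t \<theta> = (\<Sum>\<^sub>\<infinity>k\<in>(UNIV::int set). complex_of_real (a_dens t k) * ee (real_of_int k * \<theta>))"

definition beta :: "nat \<Rightarrow> real \<Rightarrow> complex" where
  "beta t \<theta> = (\<Sum>\<^sub>\<infinity>k\<in>(UNIV::int set). complex_of_real (b_dens t k) * ee (real_of_int k * \<theta>))"

definition SS :: "nat \<Rightarrow> real \<Rightarrow> complex ^ 6" where
  "SS t \<theta> = vector [alpha (2*t) \<theta>, beta (2*t) \<theta>, alpha (2*t+1) \<theta>, beta (2*t+1) \<theta>,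
                     alpha (2*t+2) \<theta>, beta (2*t+2) \<theta>]"

definition D0 :: "real \<Rightarrow> complex ^ 6 ^ 6" where
  "D0 \<theta> = (let x = ee \<theta>; M = (vector [
     vector [1, 1, 0, 0, 0, 0],
     vector [1, 1, 0, 0, 0, 0],
     vector [1, x, 0, 0, 0, 0],
     vector [0, 0, 1, inverse x, 0, 0],
     vector [0, 0, 1, 1, 0, 0],
     vector [0, 0, x, inverse x, 0, 0]] :: complex^6^6) in
     (\<chi> i j. M $ i $ j / 2))"

definition D1 :: "real \<Rightarrow> complex ^ 6 ^ 6" where
  "D1 \<theta> = (let x = ee \<theta>; M = (vector [
     vector [0, 0, 1, 1, 0, 0],
     vector [0, 0, x, inverse x, 0, 0],
     vector [0, 0, x, 1, 0, 0],
     vector [0, 0, 0, 0, 1, inverse x],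
     vector [0, 0, 0, 0, 1, 1],
     vector [0, 0, 0, 0, 1, 1]] :: complex^6^6) in
     (\<chi> i j. M $ i $ j / 2))"

end

theory Submission
  imports Defs
begin

lemma lim_half_aux: "(\<lambda>M::nat. c / real (2*M+1)) \<longlonglongrightarrow> 0"
proof -
  have "strict_mono (\<lambda>M::nat. 2*M+1)" by (simp add: strict_mono_def)
  from LIMSEQ_subseq_LIMSEQ[OF lim_const_over_n[of c] this] show ?thesis by (simp add: o_def)
qed


definition Sr :: "nat \<Rightarrow> nat set" where
  "Sr n = {j::nat. odd (n div 2 ^ j) \<and> odd (n div 2 ^ Suc j)}"

lemma rr_Sr: "rr n = card (Sr n)" by (simp add: rr_def Sr_def)

lemma Sr_finite: "finite (Sr n)"
proof (rule finite_subset)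
  show "Sr n \<subseteq> {..<n}"
  proof
    fix j assume "j \<in> Sr n"
    then have "n div 2 ^ j \<noteq> 0" unfolding Sr_def by (metis (mono_tags) mem_Collect_eq odd_pos not_gr0)
    then have "2 ^ j \<le> n" by (simp add: div_eq_0_iff)
    moreover have "j < 2 ^ j" by (rule less_exp)
    ultimately show "j \<in> {..<n}" by (meson less_le_trans lessThan_iff)
  qed
qed simp

lemma div_Suc_pow: "(2 * n + b) div 2 ^ Suc i = n div 2 ^ i" if "b \<le> 1" for n b i :: nat
proof -
  have "(2 * n + b) div 2 ^ Suc i = (2 * n + b) div 2 div 2 ^ i"
    by (simp add: div_mult2_eq)
  also have "(2 * n + b) div 2 = n" using that by auto
  finally show ?thesis .
qed

lemma Sr_even: "Sr (2 * n) = Suc ` Sr n"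
proof (rule set_eqI)
  fix j show "j \<in> Sr (2*n) \<longleftrightarrow> j \<in> Suc ` Sr n"
  proof (cases j)
    case 0 then show ?thesis by (auto simp: Sr_def)
  next
    case (Suc i)
    have a: "2 * n div 2 ^ Suc i = n div 2 ^ i" using div_Suc_pow[of 0 n i] by simp
    have b: "2 * n div 2 ^ Suc (Suc i) = n div 2 ^ Suc i" using div_Suc_pow[of 0 n "Suc i"] by simp
    show ?thesis using Suc a b by (auto simp: Sr_def simp del: power_Suc)
  qed
qed

lemma Sr_odd: "Sr (2 * n + 1) = (if odd n then {0} else {}) \<union> Suc ` Sr n"
proof (rule set_eqI)
  fix j show "j \<in> Sr (2*n+1) \<longleftrightarrow> j \<in> (if odd n then {0} else {}) \<union> Suc ` Sr n"
  proof (cases j)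
    case 0
    have "(2 * n + 1) div 2 = n" by simp
    then show ?thesis using 0 by (auto simp: Sr_def)
  next
    case (Suc i)
    have a: "(2 * n + 1) div 2 ^ Suc i = n div 2 ^ i" using div_Suc_pow[of 1 n i] by simp
    have b: "(2 * n + 1) div 2 ^ Suc (Suc i) = n div 2 ^ Suc i" using div_Suc_pow[of 1 n "Suc i"] by simp
    show ?thesis using Suc a b by (auto simp: Sr_def simp del: power_Suc)
  qed
qed

lemma rr_even: "rr (2 * n) = rr n"
  unfolding rr_Sr Sr_even by (simp add: card_image)

lemma rr_odd: "rr (2 * n + 1) = rr n + (if odd n then 1 else 0)"
proof -
  have "0 \<notin> Suc ` Sr n" by auto
  then show ?thesis unfolding rr_Sr Sr_odd using Sr_finite[of n]
    by (auto simp: card_image)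
qed

lemma I1: "dd (2 * s) (2*n) = dd s n"
  unfolding dd_def using rr_even[of "n+s"] rr_even[of n] by (simp add: algebra_simps)

lemma I2: "dd (2 * s) (2*n+1) = dd s n + of_bool (odd (n+s)) - of_bool (odd n)"
proof -
  have "2*n+1+2 * s = 2*(n+s)+1" by simp
  then show ?thesis unfolding dd_def using rr_odd[of "n+s"] rr_odd[of n] by auto
qed

lemma I3: "dd (2 * s+1) (2*n) = dd s n + of_bool (odd (n+s))"
proof -
  have "2*n+(2 * s+1) = 2*(n+s)+1" by simp
  then show ?thesis unfolding dd_def using rr_odd[of "n+s"] rr_even[of n] by auto
qed

lemma I4: "dd (2 * s+1) (2*n+1) = dd (s+1) n - of_bool (odd n)"
proof -
  have "2*n+1+(2 * s+1) = 2*(n+(s+1))" by simp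
  then show ?thesis unfolding dd_def using rr_even[of "n+(s+1)"] rr_odd[of n] by auto
qed

definition cnt :: "(nat \<Rightarrow> bool) \<Rightarrow> nat \<Rightarrow> nat" where
  "cnt P N = card {n. n < N \<and> P n}"

definition ratio :: "(nat \<Rightarrow> bool) \<Rightarrow> nat \<Rightarrow> real" where
  "ratio P N = real (cnt P N) / real N"

definition hasdens :: "(nat \<Rightarrow> bool) \<Rightarrow> real \<Rightarrow> bool" where
  "hasdens P d \<longleftrightarrow> ratio P \<longlonglongrightarrow> d"

lemma hasdens_density: "hasdens P d \<Longrightarrow> density P = d"
  unfolding hasdens_def density_def ratio_def cnt_def by (rule limI)

lemma cnt_Suc: "cnt P (Suc N) = cnt P N + (if P N then 1 else 0)"
proof -
  have "{n. n < Suc N \<and> P n} = (if P N then insert N {n. n < N \<and> P n} else {n. n < N \<and> P n})"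
    by (auto simp: less_Suc_eq)
  then show ?thesis unfolding cnt_def by auto
qed

lemma cnt_double: "cnt P (2*M) = cnt (\<lambda>m. P (2*m)) M + cnt (\<lambda>m. P (2*m+1)) M"
proof (induction M)
  case 0 then show ?case by (simp add: cnt_def)
next
  case (Suc M)
  have "2 * Suc M = Suc (Suc (2*M))" by simp
  then show ?case using Suc by (simp add: cnt_Suc)
qed

lemma cnt_double1: "cnt P (2*M+1) = cnt (\<lambda>m. P (2*m)) (M+1) + cnt (\<lambda>m. P (2*m+1)) M"
  using cnt_double[of P M] by (simp add: cnt_Suc)

lemma cnt_0: "cnt P 0 = 0" by (simp add: cnt_def)

lemma seq_even_odd:
  assumes "(\<lambda>n. f (2 * n)) \<longlonglongrightarrow> (l :: real)"
      and "(\<lambda>n. f (2 * n + 1)) \<longlonglongrightarrow> l"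
  shows "f \<longlonglongrightarrow> l"
proof (rule LIMSEQ_I)
  fix r :: real assume "r > 0"
  obtain N1 where N1: "\<forall>n\<ge>N1. norm (f (2*n) - l) < r" using LIMSEQ_D[OF assms(1) \<open>r>0\<close>] by blast
  obtain N2 where N2: "\<forall>n\<ge>N2. norm (f (2*n+1) - l) < r" using LIMSEQ_D[OF assms(2) \<open>r>0\<close>] by blast
  show "\<exists>no. \<forall>n\<ge>no. norm (f n - l) < r"
  proof (intro exI allI impI)
    fix n assume "2*N1 + 2*N2 \<le> n"
    show "norm (f n - l) < r"
    proof (cases "even n")
      case True then obtain m where "n = 2*m" by blast
      then show ?thesis using N1 \<open>2*N1 + 2*N2 \<le> n\<close> by auto
    next
      case False then obtain m where "n = 2*m+1" using oddE by blast
      then show ?thesis using N2 \<open>2*N1 + 2*N2 \<le> n\<close> by auto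
    qed
  qed
qed

lemma hasdens_split:
  assumes A: "hasdens (\<lambda>m. P (2*m)) A" and B: "hasdens (\<lambda>m. P (2*m+1)) B"
  shows "hasdens P ((A+B)/2)"
  unfolding hasdens_def
proof (rule seq_even_odd)
  let ?e = "\<lambda>m. P (2*m)" and ?o = "\<lambda>m. P (2*m+1)"
  have Al: "ratio ?e \<longlonglongrightarrow> A" and Bl: "ratio ?o \<longlonglongrightarrow> B" using A B by (simp_all add: hasdens_def)
  have "ratio P (2*M) = (ratio ?e M + ratio ?o M) / 2" for M
    unfolding ratio_def cnt_double by (simp add: add_divide_distrib)
  then have "(\<lambda>n. ratio P (2 * n)) = (\<lambda>M. (ratio ?e M + ratio ?o M) / 2)" by (rule ext)
  then show "(\<lambda>n. ratio P (2 * n)) \<longlonglongrightarrow> (A + B) / 2"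
    using tendsto_divide[OF tendsto_add[OF Al Bl], of "\<lambda>_. 2" 2] by simp
  have eq: "ratio P (2*M+1) = ratio ?e (M+1) * (real (M+1) / real (2*M+1)) + ratio ?o M * (real M / real (2*M+1))" for M
  proof (cases "M = 0")
    case True then show ?thesis unfolding ratio_def cnt_double1 by (simp add: cnt_0)
  next
    case False
    have g: "y \<noteq> 0 \<Longrightarrow> x / y * (y / z) = x / (z::real)" for x y z by simp
    have aux: "real (a+b) / real (2*M+1) = real a / real (M+1) * (real (M+1) / real (2*M+1)) + real b / real M * (real M / real (2*M+1))" for a b
      using False apply (subst g, simp)+ by (simp add: add_divide_distrib)
    show ?thesis unfolding ratio_def cnt_double1 by (rule aux)
  qed
  have e1: "real (M+1) / real (2*M+1) = 1/2 + (1/2) / real (2*M+1)" for M by (simp add: field_simps)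
  have e2: "real M / real (2*M+1) = 1/2 - (1/2) / real (2*M+1)" for M by (simp add: field_simps)
  have l1: "(\<lambda>M. real (M+1) / real (2*M+1)) \<longlonglongrightarrow> 1/2"
    unfolding e1 using tendsto_add[OF tendsto_const lim_half_aux[of "1/2"], of "1/2"] by simp
  have l2: "(\<lambda>M. real M / real (2*M+1)) \<longlonglongrightarrow> 1/2"
    unfolding e2 using tendsto_diff[OF tendsto_const lim_half_aux[of "1/2"], of "1/2"] by simp
  have Al1: "(\<lambda>M. ratio ?e (M+1)) \<longlonglongrightarrow> A" using Al by (rule LIMSEQ_ignore_initial_segment)
  have "(\<lambda>M. ratio ?e (M+1) * (real (M+1) / real (2*M+1)) + ratio ?o M * (real M / real (2*M+1))) \<longlonglongrightarrow> A * (1/2) + B * (1/2)"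
    by (intro tendsto_intros Al1 Bl l1 l2)
  then show "(\<lambda>n. ratio P (2 * n + 1)) \<longlonglongrightarrow> (A + B) / 2" unfolding eq by (simp add: field_simps)
qed

lemma hasdens_const: "hasdens (\<lambda>_. c) (if c then 1 else 0)"
proof (cases c)
  case True
  have "ratio (\<lambda>_. c) N = 1" if "N > 0" for N using that True by (simp add: ratio_def cnt_def)
  then have "\<forall>\<^sub>F N in sequentially. (\<lambda>_. 1) N = ratio (\<lambda>_. c) N"
    unfolding eventually_sequentially by (metis One_nat_def less_eq_Suc_le)
  from Lim_transform_eventually[OF tendsto_const this] show ?thesis using True unfolding hasdens_def by simp
next
  case False
  have "ratio (\<lambda>_. False) = (\<lambda>_. 0)" by (simp add: ratio_def cnt_def fun_eq_iff)
  then show ?thesis using False by (simp add: hasdens_def)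
qed

definition ea :: "nat \<Rightarrow> int \<Rightarrow> nat \<Rightarrow> bool" where "ea T k = (\<lambda>n. dd T (2*n) = k)"
definition eb :: "nat \<Rightarrow> int \<Rightarrow> nat \<Rightarrow> bool" where "eb T k = (\<lambda>n. dd T (2*n+1) = k)"

lemma R1a: "(\<lambda>m. ea (2 * s) k (2*m)) = ea s k"
  unfolding ea_def using I1[of s "2*m" for m] by simp
lemma R1b: "(\<lambda>m. ea (2 * s) k (2*m+1)) = eb s k"
  unfolding ea_def eb_def using I1[of s "2*m+1" for m] by simp
lemma R2a: "(\<lambda>m. eb (2 * s) k (2*m)) = ea s (k - of_bool (odd s))"
  unfolding ea_def eb_def using I2[of s "2*m" for m] by (auto simp: fun_eq_iff)
lemma R2b: "(\<lambda>m. eb (2 * s) k (2*m+1)) = eb s (k - of_bool (even s) + 1)"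
  unfolding ea_def eb_def using I2[of s "2*m+1" for m] by (auto simp: fun_eq_iff)
lemma R3a: "(\<lambda>m. ea (2 * s+1) k (2*m)) = ea s (k - of_bool (odd s))"
  unfolding ea_def eb_def using I3[of s "2*m" for m] by (auto simp: fun_eq_iff)
lemma R3b: "(\<lambda>m. ea (2 * s+1) k (2*m+1)) = eb s (k - of_bool (even s))"
  unfolding ea_def eb_def using I3[of s "2*m+1" for m] by (auto simp: fun_eq_iff)
lemma R4a: "(\<lambda>m. eb (2 * s+1) k (2*m)) = ea (s+1) k"
  unfolding ea_def eb_def using I4[of s "2*m" for m] by (auto simp: fun_eq_iff)
lemma R4b: "(\<lambda>m. eb (2 * s+1) k (2*m+1)) = eb (s+1) (k+1)"
  unfolding ea_def eb_def using I4[of s "2*m+1" for m] by (auto simp: fun_eq_iff)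

lemma split_ex:
  assumes "\<exists>A. hasdens (\<lambda>m. P (2*m)) A" "\<exists>B. hasdens (\<lambda>m. P (2*m+1)) B"
  shows "\<exists>C. hasdens P C"
  using assms hasdens_split by blast

lemma dd0: "dd 0 n = 0" by (simp add: dd_def)

lemma ex0: "(\<exists>d. hasdens (ea 0 k) d) \<and> (\<exists>d. hasdens (eb 0 k) d)"
proof -
  have "ea 0 k = (\<lambda>_. 0 = k)" "eb 0 k = (\<lambda>_. 0 = k)" by (simp_all add: ea_def eb_def dd0)
  then show ?thesis using hasdens_const[of "0 = k"] by auto
qed

lemma dd1_le: "dd 1 n \<le> 1"
proof (induction n rule: less_induct)
  case (less n)
  show ?case
  proof (cases "even n")
    case True then obtain m where m: "n = 2*m" by blast
    have "dd (2*0+1) (2*m) = dd 0 m + of_bool (odd (m+0))" by (rule I3)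
    then show ?thesis using m by (simp add: dd0)
  next
    case False then obtain m where m: "n = 2*m+1" using oddE by blast
    have "dd (2*0+1) (2*m+1) = dd (0+1) m - of_bool (odd m)" by (rule I4)
    moreover have "dd 1 m \<le> 1" using less m by simp
    ultimately show ?thesis using m by simp
  qed
qed

lemma ex_a1: "\<exists>d. hasdens (ea 1 k) d"
proof (rule split_ex)
  show "\<exists>A. hasdens (\<lambda>m. ea 1 k (2*m)) A" using R3a[of 0 k] ex0 by simp
  show "\<exists>A. hasdens (\<lambda>m. ea 1 k (2*m+1)) A" using R3b[of 0 k] ex0 by simp
qed

lemma ex_b1: "\<exists>d. hasdens (eb 1 k) d"
proof (induction "nat (2 - k)" arbitrary: k rule: less_induct)
  case less
  show ?case
  proof (cases "k \<ge> 2")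
    case True
    have "eb 1 k = (\<lambda>_. False)"
    proof (rule ext)
      fix n show "eb 1 k n = False" using dd1_le[of "2*n+1"] True unfolding eb_def by auto
    qed
    then show ?thesis using hasdens_const[of False] by auto
  next
    case False
    show ?thesis
    proof (rule split_ex)
      show "\<exists>A. hasdens (\<lambda>m. eb 1 k (2*m)) A" using R4a[of 0 k] ex_a1 by simp
      have "nat (2 - (k+1)) < nat (2 - k)" using False by simp
      then show "\<exists>A. hasdens (\<lambda>m. eb 1 k (2*m+1)) A" using R4b[of 0 k] less by simp
    qed
  qed
qed

lemma ex_all: "(\<exists>d. hasdens (ea T k) d) \<and> (\<exists>d. hasdens (eb T k) d)"
proof (induction T arbitrary: k rule: less_induct)
  case (less T)
  show ?case
  proof (cases "T = 0")
    case True then show ?thesis using ex0 by simp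
  next
    case T0: False
    show ?thesis
    proof (cases "T = 1")
      case True then show ?thesis using ex_a1 ex_b1 by simp
    next
      case T1: False
      show ?thesis
      proof (cases "even T")
        case True then obtain s where s: "T = 2 * s" by blast
        then have "s < T" using T0 by simp
        note IH = less[OF this]
        show ?thesis unfolding s
          by (intro conjI; rule split_ex) (simp_all only: R1a R1b R2a R2b IH)
      next
        case False then obtain s where s: "T = 2 * s + 1" using oddE by blast
        then have "s < T" "s + 1 < T" using T1 by auto
        note IH = less[OF this(1)] less[OF this(2)]
        show ?thesis unfolding s
          by (intro conjI; rule split_ex) (simp_all only: R3a R3b R4a R4b IH)
      qed
    qed
  qed
qed

lemma hd_a: "hasdens (ea T k) (a_dens T k)"
proof -
  obtain d where d: "hasdens (ea T k) d" using ex_all by blast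
  have "a_dens T k = d" unfolding a_dens_def using hasdens_density[OF d] by (simp add: ea_def)
  then show ?thesis using d by simp
qed

lemma hd_b: "hasdens (eb T k) (b_dens T k)"
proof -
  obtain d where d: "hasdens (eb T k) d" using ex_all by blast
  have "b_dens T k = d" unfolding b_dens_def using hasdens_density[OF d] by (simp add: eb_def)
  then show ?thesis using d by simp
qed

lemma hd_unique: "hasdens P x \<Longrightarrow> hasdens P y \<Longrightarrow> x = y"
  unfolding hasdens_def using LIMSEQ_unique by blast

lemma rec_from:
  assumes "hasdens P x" "hasdens (\<lambda>m. P (2*m)) A" "hasdens (\<lambda>m. P (2*m+1)) B"
  shows "x = (A + B) / 2"
  using hd_unique[OF assms(1) hasdens_split[OF assms(2,3)]] .

lemma a_even: "a_dens (2 * s) k = (a_dens s k + b_dens s k) / 2"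
  by (rule rec_from[OF hd_a]) (simp_all only: R1a R1b hd_a hd_b)
lemma b_even: "b_dens (2 * s) k = (a_dens s (k - of_bool (odd s)) + b_dens s (k - of_bool (even s) + 1)) / 2"
  by (rule rec_from[OF hd_b]) (simp_all only: R2a R2b hd_a hd_b)
lemma a_odd: "a_dens (2 * s + 1) k = (a_dens s (k - of_bool (odd s)) + b_dens s (k - of_bool (even s))) / 2"
  by (rule rec_from[OF hd_a]) (simp_all only: R3a R3b hd_a hd_b)
lemma b_odd: "b_dens (2 * s + 1) k = (a_dens (s+1) (k - 0) + b_dens (s+1) (k - (-1))) / 2"
  by (rule rec_from[OF hd_b]) (simp_all only: R4a R4b hd_a hd_b diff_0_right diff_minus_eq_add)

lemma a0: "a_dens 0 k = (if k = 0 then 1 else 0)"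
proof -
  have "ea 0 k = (\<lambda>_. 0 = k)" by (simp add: ea_def dd0)
  then show ?thesis using hd_unique[OF hd_a[of 0 k]] hasdens_const[of "0 = k"] by auto
qed
lemma b0: "b_dens 0 k = (if k = 0 then 1 else 0)"
proof -
  have "eb 0 k = (\<lambda>_. 0 = k)" by (simp add: eb_def dd0)
  then show ?thesis using hd_unique[OF hd_b[of 0 k]] hasdens_const[of "0 = k"] by auto
qed

definition gd :: "(int \<Rightarrow> real) \<Rightarrow> bool" where
  "gd f \<longleftrightarrow> (\<forall>k. 0 \<le> f k) \<and> (\<forall>F. finite F \<longrightarrow> sum f F \<le> 1)"

lemma cnt_sum: "finite F \<Longrightarrow> (\<Sum>k\<in>F. cnt (\<lambda>n. f n = k) N) \<le> N"
proof -
  assume F: "finite F"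
  have "(\<Sum>k\<in>F. cnt (\<lambda>n. f n = k) N) = card (\<Union>k\<in>F. {n. n < N \<and> f n = k})"
    unfolding cnt_def by (rule card_UN_disjoint[symmetric]) (auto simp: F)
  also have "\<dots> \<le> card {..<N}" by (rule card_mono) auto
  finally show ?thesis by simp
qed

lemma gd_dens:
  assumes h: "\<And>k. hasdens (\<lambda>n. f n = k) (d k)"
  shows "gd d"
  unfolding gd_def
proof (intro conjI allI impI)
  fix k
  have "ratio (\<lambda>n. f n = k) \<longlonglongrightarrow> d k" using h unfolding hasdens_def by blast
  moreover have "\<forall>N. 0 \<le> ratio (\<lambda>n. f n = k) N" by (simp add: ratio_def)
  ultimately show "0 \<le> d k" using LIMSEQ_le_const by blast
next
  fix F :: "int set" assume F: "finite F"
  have "(\<lambda>N. \<Sum>k\<in>F. ratio (\<lambda>n. f n = k) N) \<longlonglongrightarrow> sum d F"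
    using h unfolding hasdens_def by (intro tendsto_sum) auto
  moreover have "(\<Sum>k\<in>F. ratio (\<lambda>n. f n = k) N) \<le> 1" for N
  proof (cases "N = 0")
    case True then show ?thesis by (simp add: ratio_def)
  next
    case False
    have "(\<Sum>k\<in>F. ratio (\<lambda>n. f n = k) N) = real (\<Sum>k\<in>F. cnt (\<lambda>n. f n = k) N) / real N"
      unfolding ratio_def by (simp add: sum_divide_distrib)
    also have "\<dots> \<le> real N / real N"
    proof (rule divide_right_mono)
      show "real (\<Sum>k\<in>F. cnt (\<lambda>n. f n = k) N) \<le> real N"
        using cnt_sum[OF F, of f N] by (simp only: of_nat_le_iff)
    qed simp
    finally show ?thesis using False by simp
  qed
  ultimately show "sum d F \<le> 1" using LIMSEQ_le_const2 by blast
qed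

lemma gd_a: "gd (a_dens T)"
  by (rule gd_dens[of "\<lambda>n. dd T (2 * n)"]) (use hd_a in \<open>simp add: ea_def\<close>)
lemma gd_b: "gd (b_dens T)"
  by (rule gd_dens[of "\<lambda>n. dd T (2 * n+1)"]) (use hd_b in \<open>simp add: eb_def\<close>)

lemma gd_shift: "gd f \<Longrightarrow> gd (\<lambda>k. f (k - c))"
  unfolding gd_def
proof (intro conjI allI impI)
  fix F :: "int set" assume g: "(\<forall>k. 0 \<le> f k) \<and> (\<forall>F. finite F \<longrightarrow> sum f F \<le> 1)" and F: "finite F"
  have "inj_on (\<lambda>k. k - c) F" by (simp add: inj_on_def)
  then have "(\<Sum>k\<in>F. f (k - c)) = sum f ((\<lambda>k. k - c) ` F)" by (simp add: sum.reindex)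
  also have "\<dots> \<le> 1" using g F by simp
  finally show "(\<Sum>k\<in>F. f (k - c)) \<le> 1" .
qed auto

lemma ee_add: "ee (x + y) = ee x * ee y"
  unfolding ee_def by (simp add: distrib_left exp_add)
lemma norm_ee: "norm (ee x) = 1"
  unfolding ee_def by simp
lemma ee_0: "ee 0 = 1" unfolding ee_def by simp
lemma ee_neg: "ee (- x) = inverse (ee x)"
  unfolding ee_def by (simp add: exp_minus)

definition chf :: "(int \<Rightarrow> real) \<Rightarrow> real \<Rightarrow> complex" where
  "chf f \<theta> = (\<Sum>\<^sub>\<infinity>k\<in>(UNIV::int set). complex_of_real (f k) * ee (real_of_int k * \<theta>))"

lemma gd_summ:
  assumes g: "gd f"
  shows "(\<lambda>k. complex_of_real (f k) * ee (real_of_int k * \<theta>)) summable_on UNIV"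
proof (rule abs_summable_summable)
  have fs: "f summable_on UNIV"
  proof (rule nonneg_bdd_above_summable_on)
    show "\<And>x. x \<in> UNIV \<Longrightarrow> 0 \<le> f x" using g unfolding gd_def by blast
    show "bdd_above (sum f ` {F. F \<subseteq> UNIV \<and> finite F})"
    proof (rule bdd_aboveI[of _ 1])
      fix x assume "x \<in> sum f ` {F. F \<subseteq> UNIV \<and> finite F}"
      then obtain F where "finite F" "x = sum f F" by blast
      then show "x \<le> 1" using g unfolding gd_def by blast
    qed
  qed
  have eq: "(\<lambda>k. norm (complex_of_real (f k) * ee (real_of_int k * \<theta>))) = f"
  proof (rule ext)
    fix k
    have "0 \<le> f k" using g unfolding gd_def by blast
    then show "norm (complex_of_real (f k) * ee (real_of_int k * \<theta>)) = f k"
      by (simp only: norm_mult norm_ee norm_of_real mult_1_right abs_of_nonneg)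
  qed
  show "(\<lambda>k. norm (complex_of_real (f k) * ee (real_of_int k * \<theta>))) summable_on UNIV"
    unfolding eq by (rule fs)
qed

lemma chf_shift: "chf (\<lambda>k. f (k - c)) \<theta> = ee (real_of_int c * \<theta>) * chf f \<theta>"
proof -
  have b: "bij_betw (\<lambda>j. j + c) UNIV (UNIV::int set)"
    by (rule bij_betwI[of _ _ _ "\<lambda>j. j - c"]) auto
  have "chf (\<lambda>k. f (k - c)) \<theta> = (\<Sum>\<^sub>\<infinity>j\<in>UNIV. complex_of_real (f (j + c - c)) * ee (real_of_int (j + c) * \<theta>))"
    unfolding chf_def by (rule infsum_reindex_bij_betw[OF b, symmetric])
  also have "\<dots> = (\<Sum>\<^sub>\<infinity>j\<in>UNIV. ee (real_of_int c * \<theta>) * (complex_of_real (f j) * ee (real_of_int j * \<theta>)))"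
    by (rule infsum_cong) (simp add: distrib_right ee_add)
  also have "\<dots> = ee (real_of_int c * \<theta>) * chf f \<theta>"
    unfolding chf_def by (rule infsum_cmult_right')
  finally show ?thesis .
qed

lemma chf_comb:
  assumes f: "gd f" and g: "gd g"
  shows "chf (\<lambda>k. (f (k - c) + g (k - d)) / 2) \<theta> = (ee (real_of_int c * \<theta>) * chf f \<theta> + ee (real_of_int d * \<theta>) * chf g \<theta>) / 2"
proof -
  let ?F = "\<lambda>k. complex_of_real (f (k - c)) * ee (real_of_int k * \<theta>)"
  let ?G = "\<lambda>k. complex_of_real (g (k - d)) * ee (real_of_int k * \<theta>)"
  have sF: "?F summable_on UNIV" by (rule gd_summ[OF gd_shift[OF f]])
  have sG: "?G summable_on UNIV" by (rule gd_summ[OF gd_shift[OF g]])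
  have "chf (\<lambda>k. (f (k - c) + g (k - d)) / 2) \<theta> = (\<Sum>\<^sub>\<infinity>k\<in>UNIV. (?F k + ?G k) * (1/2))"
    unfolding chf_def by (rule infsum_cong) (simp add: field_simps)
  also have "\<dots> = (\<Sum>\<^sub>\<infinity>k\<in>UNIV. ?F k + ?G k) * (1/2)" by (rule infsum_cmult_left')
  also have "(\<Sum>\<^sub>\<infinity>k\<in>UNIV. ?F k + ?G k) = chf (\<lambda>k. f (k - c)) \<theta> + chf (\<lambda>k. g (k - d)) \<theta>"
    unfolding chf_def by (rule infsum_add[OF sF sG])
  finally show ?thesis unfolding chf_shift by simp
qed

lemma alpha_chf: "alpha t \<theta> = chf (a_dens t) \<theta>" by (simp add: alpha_def chf_def)
lemma beta_chf: "beta t \<theta> = chf (b_dens t) \<theta>" by (simp add: beta_def chf_def)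

lemma comb_ab:
  assumes "\<And>k. h k = (a_dens s (k - c) + b_dens s (k - d)) / 2"
  shows "chf h \<theta> = (ee (real_of_int c * \<theta>) * alpha s \<theta> + ee (real_of_int d * \<theta>) * beta s \<theta>) / 2"
proof -
  have "h = (\<lambda>k. (a_dens s (k - c) + b_dens s (k - d)) / 2)" using assms by (rule ext)
  then show ?thesis using chf_comb[OF gd_a gd_b] by (simp add: alpha_chf beta_chf)
qed

lemma CA2: "alpha (2 * s) \<theta> = (alpha s \<theta> + beta s \<theta>) / 2"
  using comb_ab[of "a_dens (2 * s)" s 0 0 \<theta>] a_even by (simp add: alpha_chf ee_0)

lemma CB2e: "beta (2 * (2 * t)) \<theta> = (alpha (2 * t) \<theta> + beta (2 * t) \<theta>) / 2"
  using comb_ab[of "b_dens (2 * (2 * t))" "2 * t" 0 0 \<theta>] b_even[of "2 * t"] by (simp add: beta_chf ee_0)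

lemma CB2o: "beta (2 * (2 * t + 1)) \<theta> = (ee \<theta> * alpha (2 * t+1) \<theta> + inverse (ee \<theta>) * beta (2 * t+1) \<theta>) / 2"
  using comb_ab[of "b_dens (2 * (2 * t+1))" "2 * t+1" 1 "-1" \<theta>] b_even[of "2 * t+1"] by (simp add: beta_chf ee_neg)

lemma CA3e: "alpha (2 * (2 * t) + 1) \<theta> = (alpha (2 * t) \<theta> + ee \<theta> * beta (2 * t) \<theta>) / 2"
  using comb_ab[of "a_dens (2 * (2 * t)+1)" "2 * t" 0 1 \<theta>] a_odd[of "2 * t"] by (simp add: alpha_chf ee_0)

lemma CA3o: "alpha (2 * (2 * t + 1) + 1) \<theta> = (ee \<theta> * alpha (2 * t+1) \<theta> + beta (2 * t+1) \<theta>) / 2"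
  using comb_ab[of "a_dens (2 * (2 * t+1)+1)" "2 * t+1" 1 0 \<theta>] a_odd[of "2 * t+1"] by (simp add: alpha_chf ee_0)

lemma CB3: "beta (2 * s + 1) \<theta> = (alpha (s+1) \<theta> + inverse (ee \<theta>) * beta (s+1) \<theta>) / 2"
  using comb_ab[of "b_dens (2 * s+1)" "s+1" 0 "-1" \<theta>] b_odd[of s] by (simp add: beta_chf ee_0 ee_neg)

lemma exhaust_6:
  fixes x :: 6
  shows "x = 1 \<or> x = 2 \<or> x = 3 \<or> x = 4 \<or> x = 5 \<or> x = 6"
proof (induct x)
  case (of_int z)
  then have "z = 0 \<or> z = 1 \<or> z = 2 \<or> z = 3 \<or> z = 4 \<or> z = 5" by fastforce
  then show ?case by auto
qed
lemma UNIV_6: "UNIV = {1, 2, 3, 4, 5, 6::6}"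
  using exhaust_6 by auto
lemma sum_6: "sum f (UNIV::6 set) = f 1 + f 2 + f 3 + f 4 + f 5 + f 6"
  unfolding UNIV_6 by (simp add: ac_simps)
lemma vector_6 [simp]:
 "(vector [x1,x2,x3,x4,x5,x6] ::('a::zero)^6)$1 = x1"
 "(vector [x1,x2,x3,x4,x5,x6] ::('a::zero)^6)$2 = x2"
 "(vector [x1,x2,x3,x4,x5,x6] ::('a::zero)^6)$3 = x3"
 "(vector [x1,x2,x3,x4,x5,x6] ::('a::zero)^6)$4 = x4"
 "(vector [x1,x2,x3,x4,x5,x6] ::('a::zero)^6)$5 = x5"
 "(vector [x1,x2,x3,x4,x5,x6] ::('a::zero)^6)$6 = x6"
  unfolding vector_def by simp_all
lemma forall_6: "(\<forall>i::6. P i) \<longleftrightarrow> P 1 \<and> P 2 \<and> P 3 \<and> P 4 \<and> P 5 \<and> P 6"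
proof
  assume "\<forall>i. P i" then show "P 1 \<and> P 2 \<and> P 3 \<and> P 4 \<and> P 5 \<and> P 6" by blast
next
  assume h: "P 1 \<and> P 2 \<and> P 3 \<and> P 4 \<and> P 5 \<and> P 6"
  show "\<forall>i. P i"
  proof
    fix i :: 6
    from exhaust_6[of i] h show "P i" by (elim disjE) simp_all
  qed
qed
lemma vec6_eq: "(v::'a^6) = w \<longleftrightarrow> v$1 = w$1 \<and> v$2 = w$2 \<and> v$3 = w$3 \<and> v$4 = w$4 \<and> v$5 = w$5 \<and> v$6 = w$6"
  unfolding vec_eq_iff by (rule forall_6)
lemma Dmul0: "D0 \<theta> *v vector [a,b,c,d,e,f] = vector [(a+b)/2, (a+b)/2, (a + ee \<theta> * b)/2, (c + inverse (ee \<theta>) * d)/2, (c+d)/2, (ee \<theta> * c + inverse (ee \<theta>) * d)/2]"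
  unfolding vec6_eq by (simp add: D0_def Let_def matrix_vector_mult_def sum_6 add_divide_distrib)
lemma Dmul1: "D1 \<theta> *v vector [a,b,c,d,e,f] = vector [(c+d)/2, (ee \<theta> * c + inverse (ee \<theta>) * d)/2, (ee \<theta> * c + d)/2, (e + inverse (ee \<theta>) * f)/2, (e+f)/2, (e+f)/2]"
  unfolding vec6_eq by (simp add: D1_def Let_def matrix_vector_mult_def sum_6 add_divide_distrib)

lemma delta_chf: "chf (\<lambda>k. if k = 0 then 1 else 0) \<theta> = 1"
proof -
  have "chf (\<lambda>k. if k = 0 then 1 else 0) \<theta> = infsum (\<lambda>k. complex_of_real (if k = 0 then 1 else 0) * ee (real_of_int k * \<theta>)) {0}"
    unfolding chf_def by (rule infsum_cong_neutral) auto
  then show ?thesis by (simp add: ee_0)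
qed

lemma alpha0: "alpha 0 \<theta> = 1"
proof -
  have "a_dens 0 = (\<lambda>k. if k = 0 then 1 else 0)" by (rule ext) (rule a0)
  then show ?thesis unfolding alpha_chf using delta_chf by simp
qed
lemma beta0: "beta 0 \<theta> = 1"
proof -
  have "b_dens 0 = (\<lambda>k. if k = 0 then 1 else 0)" by (rule ext) (rule b0)
  then show ?thesis unfolding beta_chf using delta_chf by simp
qed

lemma step0: "SS (2 * t) \<theta> = D0 \<theta> *v SS t \<theta>"
proof -
  have e: "2 * (2 * t) + 2 = 2 * (2 * t + 1)" by simp
  have "SS (2 * t) \<theta> = vector [alpha (2 * (2 * t)) \<theta>, beta (2 * (2 * t)) \<theta>, alpha (2 * (2 * t) + 1) \<theta>,
      beta (2 * (2 * t) + 1) \<theta>, alpha (2 * (2 * t + 1)) \<theta>, beta (2 * (2 * t + 1)) \<theta>]"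
    unfolding SS_def e ..
  also have "\<dots> = D0 \<theta> *v SS t \<theta>"
    unfolding SS_def Dmul0 CA2 CB2e CA3e CB3 CB2o ..
  finally show ?thesis .
qed

lemma step1: "SS (2 * t + 1) \<theta> = D1 \<theta> *v SS t \<theta>"
proof -
  have e: "2 * (2 * t + 1) + 2 = 2 * (2 * (t + 1))" "2 * t + 2 = 2 * (t + 1)" by simp_all
  have e2: "2 * t + 1 + 1 = 2 * (t + 1)" by simp
  have "SS (2 * t + 1) \<theta> = vector [alpha (2 * (2 * t + 1)) \<theta>, beta (2 * (2 * t + 1)) \<theta>, alpha (2 * (2 * t + 1) + 1) \<theta>,
      beta (2 * (2 * t + 1) + 1) \<theta>, alpha (2 * (2 * (t + 1))) \<theta>, beta (2 * (2 * (t + 1))) \<theta>]"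
    unfolding SS_def e ..
  also have "\<dots> = D1 \<theta> *v SS t \<theta>"
    unfolding SS_def Dmul1 CA2 CB2e CA3o CB3 CB2o e e2 ..
  finally show ?thesis .
qed

lemma alg1: "(2 - y::complex) \<noteq> 0 \<Longrightarrow> x * y = 1 \<Longrightarrow> ((x+1)/2 + (x+1)/(2*(2-y)))/2 = (3*x+2-y)/(4*(2-y))"
proof -
  assume d: "(2 - y::complex) \<noteq> 0" and xy: "x * y = 1"
  have "((x+1)/2 + (x+1)/(2*(2-y)))/2 = ((1+x)*(2-y) + (x+1))/(4*(2-y))"
    using d by (simp add: field_simps)
  also have "(1+x)*(2-y) + (x+1) = 3*x+3-y - x*y"
    by (simp add: algebra_simps)
  also have "\<dots> = 3*x+2-y" using xy by simp
  finally show ?thesis .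
qed
lemma alg2: "(2 - y::complex) \<noteq> 0 \<Longrightarrow> x * y = 1 \<Longrightarrow> (x * ((x+1)/2) + y * ((x+1)/(2*(2-y))))/2 = (2*(x*x)+x+y)/(4*(2-y))"
proof -
  assume d: "(2 - y::complex) \<noteq> 0" and xy: "x * y = 1"
  have "(x * ((x+1)/2) + y * ((x+1)/(2*(2-y))))/2 = (x*(1+x)*(2-y) + y*(x+1))/(4*(2-y))"
    using d by (simp add: field_simps)
  also have "x*(1+x)*(2-y) + y*(x+1) = 2*(x*x) + 2*x + y - x*(x*y)"
    by (simp add: algebra_simps)
  also have "\<dots> = 2*(x*x)+x+y" using xy by simp
  finally show ?thesis .
qed
lemma alg0: "(2 - y::complex) \<noteq> 0 \<Longrightarrow> b = (a + y * b) / 2 \<Longrightarrow> b = a / (2 - y)"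
proof -
  assume d: "(2 - y::complex) \<noteq> 0" and h: "b = (a + y * b) / 2"
  from h have "b * 2 = a + y * b" by simp
  then have "b * (2 - y) = a" by (simp add: algebra_simps)
  then show ?thesis using d by (simp add: eq_divide_eq)
qed

lemma base: "SS 0 \<theta> = vector [1, 1, (ee \<theta> + 1) / 2,
              (ee \<theta> + 1) / (2 * (2 - ee (-\<theta>))),
              (3 * ee \<theta> + 2 - ee (-\<theta>)) / (4 * (2 - ee (-\<theta>))),
              (2 * ee (2*\<theta>) + ee \<theta> + ee (-\<theta>)) / (4 * (2 - ee (-\<theta>)))]"
proof -
  define x where "x = ee \<theta>"
  have nx: "norm x = 1" unfolding x_def by (rule norm_ee)
  have x0: "x \<noteq> 0" using nx by auto
  have xy: "x * inverse x = 1" using x0 by (rule right_inverse)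
  have tt: "2*\<theta> = \<theta> + \<theta>" by simp
  have ee2: "ee (2*\<theta>) = x * x" unfolding x_def tt by (rule ee_add)
  have eem: "ee (-\<theta>) = inverse x" unfolding x_def by (rule ee_neg)
  have d0: "2 - inverse x \<noteq> 0"
  proof
    assume "2 - inverse x = 0"
    then have "inverse x = 2" by simp
    then have "norm (inverse x) = 2" by simp
    then show False using nx by (simp add: norm_inverse)
  qed
  have a1: "alpha 1 \<theta> = (x + 1) / 2"
  proof -
    have "alpha (2 * (2 * 0) + 1) \<theta> = (alpha (2*0) \<theta> + ee \<theta> * beta (2*0) \<theta>) / 2" by (rule CA3e)
    then have "alpha 1 \<theta> = (alpha 0 \<theta> + x * beta 0 \<theta>) / 2" unfolding x_def by simp
    then show ?thesis unfolding alpha0 beta0 by (simp add: add.commute)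
  qed
  have b1e: "beta 1 \<theta> = (alpha 1 \<theta> + inverse x * beta 1 \<theta>) / 2"
  proof -
    have "beta (2 * 0 + 1) \<theta> = (alpha (0+1) \<theta> + inverse (ee \<theta>) * beta (0+1) \<theta>) / 2" by (rule CB3)
    then show ?thesis unfolding x_def by simp
  qed
  have b1: "beta 1 \<theta> = (x + 1) / (2 * (2 - inverse x))"
  proof -
    have "beta 1 \<theta> = alpha 1 \<theta> / (2 - inverse x)" by (rule alg0[OF d0 b1e])
    then show ?thesis unfolding a1 by (simp only: divide_divide_eq_left)
  qed
  have a2: "alpha 2 \<theta> = (alpha 1 \<theta> + beta 1 \<theta>) / 2"
  proof -
    have "alpha (2 * 1) \<theta> = (alpha 1 \<theta> + beta 1 \<theta>) / 2" by (rule CA2)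
    then show ?thesis by simp
  qed
  have b2: "beta 2 \<theta> = (x * alpha 1 \<theta> + inverse x * beta 1 \<theta>) / 2"
  proof -
    have "beta (2 * (2 * 0 + 1)) \<theta> = (ee \<theta> * alpha (2*0+1) \<theta> + inverse (ee \<theta>) * beta (2*0+1) \<theta>) / 2" by (rule CB2o)
    then show ?thesis unfolding x_def by simp
  qed
  have a2': "alpha 2 \<theta> = (3 * x + 2 - inverse x) / (4 * (2 - inverse x))"
    unfolding a2 a1 b1 by (rule alg1[OF d0 xy])
  have b2': "beta 2 \<theta> = (2 * (x * x) + x + inverse x) / (4 * (2 - inverse x))"
    unfolding b2 a1 b1 by (rule alg2[OF d0 xy])
  have n0: "(2::nat) * 0 = 0" "(0::nat) + 1 = 1" "(0::nat) + 2 = 2" by simp_all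
  have "SS 0 \<theta> = vector [alpha 0 \<theta>, beta 0 \<theta>, alpha 1 \<theta>, beta 1 \<theta>, alpha 2 \<theta>, beta 2 \<theta>]"
    unfolding SS_def n0 ..
  also have "\<dots> = vector [1, 1, (x + 1) / 2, (x + 1) / (2 * (2 - inverse x)),
              (3 * x + 2 - inverse x) / (4 * (2 - inverse x)),
              (2 * (x * x) + x + inverse x) / (4 * (2 - inverse x))]"
    unfolding alpha0 beta0 a1 b1 a2' b2' ..
  finally have fin: "SS 0 \<theta> = vector [1, 1, (x + 1) / 2, (x + 1) / (2 * (2 - inverse x)),
              (3 * x + 2 - inverse x) / (4 * (2 - inverse x)),
              (2 * (x * x) + x + inverse x) / (4 * (2 - inverse x))]" .
  show ?thesis unfolding ee2 eem x_def[symmetric] by (rule fin)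
qed

lemma part3: "alpha (8*t) = alpha (4*t) \<and> alpha (4*t) = beta (8*t) \<and> beta (8*t) = beta (4*t)"
proof -
  have e8: "8 * t = 2 * (4 * t)" and e4: "4 * t = 2 * (2 * t)" by simp_all
  have A4: "alpha (4*t) \<theta> = (alpha (2*t) \<theta> + beta (2*t) \<theta>) / 2" for \<theta> unfolding e4 by (rule CA2)
  have B4: "beta (4*t) \<theta> = (alpha (2*t) \<theta> + beta (2*t) \<theta>) / 2" for \<theta> unfolding e4 by (rule CB2e)
  have A8: "alpha (8*t) \<theta> = (alpha (4*t) \<theta> + beta (4*t) \<theta>) / 2" for \<theta> unfolding e8 by (rule CA2)
  have B8: "beta (8*t) \<theta> = (alpha (4*t) \<theta> + beta (4*t) \<theta>) / 2" for \<theta>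
    using CB2e[of "2*t" \<theta>] unfolding e8 e4[symmetric] .
  have ab: "alpha (4*t) \<theta> = beta (4*t) \<theta>" for \<theta> unfolding A4 B4 ..
  have hz: "(z + z) / 2 = (z::complex)" for z by simp
  have "alpha (8*t) \<theta> = alpha (4*t) \<theta>" for \<theta> unfolding A8 ab[symmetric] by (rule hz)
  moreover have "beta (8*t) \<theta> = alpha (4*t) \<theta>" for \<theta> unfolding B8 ab[symmetric] by (rule hz)
  ultimately show ?thesis using ab by (auto simp: fun_eq_iff)
qed

theorem proposition3p3:
  shows "(\<forall>(t::nat) (\<theta>::real).
            SS (2 * t) \<theta> = D0 \<theta> *v SS t \<theta> \<and> SS (2 * t+1) \<theta> = D1 \<theta> *v SS t \<theta>)
       \<and> (\<forall>\<theta>::real. SS 0 \<theta> = vector [1, 1, (ee \<theta> + 1) / 2,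
              (ee \<theta> + 1) / (2 * (2 - ee (-\<theta>))),
              (3 * ee \<theta> + 2 - ee (-\<theta>)) / (4 * (2 - ee (-\<theta>))),
              (2 * ee (2 * \<theta>) + ee \<theta> + ee (-\<theta>)) / (4 * (2 - ee (-\<theta>)))])
       \<and> (\<forall>t::nat. alpha (8*t) = alpha (4*t) \<and> alpha (4*t) = beta (8*t) \<and> beta (8*t) = beta (4*t))"
  using step0 step1 base part3 by blast

end
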